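(* On $U$, for each $i=1,\dots,n$ let $\Psi_i\neq0$ be a (column) eigenvector with $L\Psi_i=\lambda_i\Psi_i$. Then $\mathbf{e}^T\Psi_i\neq0$ and $$\tilde\mu_i:=\left.\frac{\mathbf{x}^T(\lambda-L)^\vee\mathbf{e}}{\mathbf{e}^T(\lambda-L)^\vee\mathbf{e}}\right|_{\lambda=\lambda_i}=\frac{\mathbf{x}^T\Psi_i}{\mathbf{e}^T\Psi_i}.$$
   Context: Fix $n\ge1$. On the open subset of $\mathbb{R}^{2n}$ with coordinates $(x_1,\dots,x_n,p_1,\dots,p_n)$ where the $x_i$ are pairwise distinct, let $L$ be the $n\times n$ matrix with $L_{ij}=p_i\delta_{ij}+(1-\delta_{ij})/(x_i-x_j)$. $A^\vee$ denotes the adjugate of a square matrix $A$. $\mathbf{e}=(1,\dots,1)^T$, $\mathbf{x}=(x_1,\dots,x_n)^T$. $U$ is an open set on which $L$ has $n$ pairwise distinct real eigenvalues $\lambda_1,\dots,\lambda_n$. *)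

theory Defs
  imports "Jordan_Normal_Form.Char_Poly"
begin

definition CM_Lax :: "nat \<Rightarrow> (nat \<Rightarrow> real) \<Rightarrow> (nat \<Rightarrow> real) \<Rightarrow> real mat" where
  "CM_Lax n x p = mat n n (\<lambda>(i,j). if i = j then p i else 1 / (x i - x j))"

definition ones_vec :: "nat \<Rightarrow> real vec" where
  "ones_vec n = vec n (\<lambda>_. 1)"

end

theory Submission
  imports Defs "Jordan_Normal_Form.Jordan_Normal_Form_Existence"
begin


lemma order_lin: "order x [:-a,1::'a::idom:] = (if a = x then 1 else 0)"
  using order_linear_power[of x "-a" 1] by auto

lemma prod_lin_dvd:
  fixes p :: "'a::idom poly"
  assumes "distinct as" "\<forall>a\<in>set as. poly p a = 0" "p \<noteq> 0"
  shows "prod_list (map (\<lambda>a. [:-a,1:]) as) dvd p"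
  using assms
proof (induction as arbitrary: p)
  case Nil thus ?case by simp
next
  case (Cons a as)
  from Cons.prems have "[:-a,1:] dvd p" using poly_eq_0_iff_dvd by auto
  then obtain r where r: "p = [:-a,1:] * r" by (erule dvdE)
  have r0: "r \<noteq> 0" using r Cons.prems by auto
  have "\<forall>b\<in>set as. poly r b = 0"
  proof
    fix b assume b: "b \<in> set as"
    hence "b \<noteq> a" using Cons.prems by auto
    moreover have "poly p b = 0" using b Cons.prems by auto
    ultimately show "poly r b = 0" using r by auto
  qed
  with Cons.IH[of r] Cons.prems r0 have "prod_list (map (\<lambda>a. [:-a,1:]) as) dvd r" by auto
  hence "[:-a,1:] * prod_list (map (\<lambda>a. [:-a,1:]) as) dvd [:-a,1:] * r" by (rule mult_dvd_mono[OF dvd_refl])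
  thus ?case unfolding r by simp
qed

lemma monic_prod_lin: "lead_coeff (prod_list (map (\<lambda>a. [:-a,1::'a::idom:]) as)) = 1
   \<and> degree (prod_list (map (\<lambda>a. [:-a,1::'a::idom:]) as)) = length as"
proof (induction as)
  case Nil thus ?case by simp
next
  case (Cons a as)
  let ?q = "prod_list (map (\<lambda>a. [:-a,1::'a::idom:]) as)"
  have q0: "?q \<noteq> 0" using Cons by auto
  have l0: "[:-a,1::'a:] \<noteq> 0" by simp
  have e: "prod_list (map (\<lambda>a. [:-a,1::'a::idom:]) (a#as)) = [:-a,1:] * ?q" by simp
  show ?case unfolding e using Cons degree_mult_eq[OF l0 q0] lead_coeff_mult[of "[:-a,1::'a:]" ?q]
    by (auto simp del: mult_pCons_left)
qed

lemma char_poly_eq_prod: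
  fixes A :: "'a::field mat"
  assumes A: "A \<in> carrier_mat n n" and d: "distinct as" and len: "length as = n"
    and ev: "\<forall>a\<in>set as. eigenvalue A a"
  shows "char_poly A = prod_list (map (\<lambda>a. [:-a,1:]) as)"
proof -
  let ?q = "prod_list (map (\<lambda>a. [:-a,1:]) as)"
  have dm: "degree (char_poly A) = n" "monic (char_poly A)" using degree_monic_char_poly[OF A] by auto
  hence p0: "char_poly A \<noteq> 0" by auto
  have "\<forall>a\<in>set as. poly (char_poly A) a = 0" using ev eigenvalue_root_char_poly[OF A] by auto
  from prod_lin_dvd[OF d this p0] obtain r where r: "char_poly A = ?q * r" by (erule dvdE)
  have q: "lead_coeff ?q = 1" "degree ?q = n" using monic_prod_lin[of as] len by auto
  have r0: "r \<noteq> 0" using r p0 by auto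
  have q0: "?q \<noteq> 0" using q by auto
  have "degree r = 0" using degree_mult_eq[OF q0 r0] r q dm by auto
  moreover have "lead_coeff r = 1" using lead_coeff_mult[of ?q r] r q dm by auto
  ultimately have "r = 1" by (metis lead_coeff_pCons(1) one_pCons degree_0_id)
  thus ?thesis using r by simp
qed

lemma sum_fst_ones: "\<forall>x\<in>set xs. fst x = (1::nat) \<Longrightarrow> sum_list (map fst xs) = length xs"
  by (induction xs) auto

lemma jordan_matrix_diag:
  assumes "\<forall>x\<in>set n_as. fst x = 1" "i < length n_as" "j < length n_as"
  shows "jordan_matrix n_as $$ (i,j) = (if i = j then snd (n_as ! i) else 0)"
  using assms
proof (induction n_as arbitrary: i j)
  case Nil thus ?case by simp
next
  case (Cons na n_as)
  obtain m a where na: "na = (m,a)" by force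
  with Cons.prems have m: "m = 1" by auto
  have dims: "dim_row (jordan_matrix n_as) = length n_as" "dim_col (jordan_matrix n_as) = length n_as"
    using sum_fst_ones[of n_as] Cons.prems by auto
  have JM: "jordan_matrix (na # n_as) = four_block_mat (jordan_block 1 a) (0\<^sub>m 1 (sum_list (map fst n_as)))
     (0\<^sub>m (sum_list (map fst n_as)) 1) (jordan_matrix n_as)"
    unfolding na m by (rule jordan_matrix_Cons)
  show ?case unfolding JM using Cons.prems Cons.IH[of "i - 1" "j - 1"] dims
    by (auto simp: na m)
qed

lemma order_prod_lin:
  fixes e :: "'a::idom"
  assumes "distinct as"
  shows "order e (prod_list (map (\<lambda>a. [:-a,1:]) as)) = (if e \<in> set as then 1 else 0)"
proof -
  have "order e (prod_list (map (\<lambda>a. [:-a,1:]) as)) = sum_list (map (order e) (map (\<lambda>a. [:-a,1:]) as))"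
    by (rule order_prod_list) auto
  also have "\<dots> = sum_list (map (\<lambda>a. if a = e then 1 else 0) as)"
    by (simp add: o_def order_lin)
  also have "\<dots> = sum (\<lambda>a. if a = e then 1 else 0) (set as)"
    using assms by (simp add: sum_list_distinct_conv_sum_set)
  also have "\<dots> = (if e \<in> set as then 1 else 0)"
    by (simp add: sum.delta)
  finally show ?thesis .
qed

lemma diag_form:
  fixes A :: "real mat"
  assumes A: "A \<in> carrier_mat n n" and cp: "char_poly A = prod_list (map (\<lambda>a. [:-a,1:]) as)"
    and d: "distinct as"
  shows "\<exists>P Q D dd. P \<in> carrier_mat n n \<and> Q \<in> carrier_mat n n \<and> D \<in> carrier_mat n n \<and>
     P * Q = 1\<^sub>m n \<and> Q * P = 1\<^sub>m n \<and> A = P * D * Q \<and>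
     (\<forall>a<n. \<forall>b<n. D $$ (a,b) = (if a = b then dd a else 0)) \<and>
     (\<forall>e\<in>set as. \<exists>k<n. dd k = e \<and> (\<forall>j<n. dd j = e \<longrightarrow> j = k))"
proof -
  obtain n_as where jnf: "jordan_nf A n_as" using jordan_nf_exists[OF A cp] by blast
  hence z: "0 \<notin> fst ` set n_as" and sim: "similar_mat A (jordan_matrix n_as)"
    unfolding jordan_nf_def by auto
  have ord: "order e (char_poly A) = (if e \<in> set as then 1 else 0)" for e
    unfolding cp by (rule order_prod_lin[OF d])
  have ones: "\<forall>x\<in>set n_as. fst x = 1"
  proof
    fix x assume x: "x \<in> set n_as"
    obtain s e where xe: "x = (s,e)" by force
    have "s \<le> order e (char_poly A)" using jordan_nf_block_size_order_bound[OF jnf] x xe by auto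
    moreover have "s \<noteq> 0" using z x xe by force
    ultimately show "fst x = 1" using ord[of e] xe by (auto split: if_splits)
  qed
  have len: "sum_list (map fst n_as) = length n_as" using sum_fst_ones[OF ones] .
  from sim obtain P Q where wit: "similar_mat_wit A (jordan_matrix n_as) P Q"
    unfolding similar_mat_def by auto
  note w = similar_mat_witD2[OF A wit]
  have ln: "length n_as = n" using w(5) len by auto
  define dd where "dd = (\<lambda>j. snd (n_as ! j))"
  have diag: "\<forall>a<n. \<forall>b<n. jordan_matrix n_as $$ (a,b) = (if a = b then dd a else 0)"
    using jordan_matrix_diag[OF ones] ln unfolding dd_def by auto
  have uniq: "\<exists>k<n. dd k = e \<and> (\<forall>j<n. dd j = e \<longrightarrow> j = k)" if e: "e \<in> set as" for e
  proof -
    have "1 = sum_list (map fst (filter (\<lambda>na. snd na = e) n_as))"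
      using jordan_nf_order[OF jnf, of e] ord[of e] e by auto
    also have "\<dots> = length (filter (\<lambda>na. snd na = e) n_as)"
      by (rule sum_fst_ones) (use ones in auto)
    also have "\<dots> = card {j. j < n \<and> dd j = e}"
      unfolding length_filter_conv_card dd_def ln ..
    finally have "card {j. j < n \<and> dd j = e} = 1" by simp
    then obtain k where "{j. j < n \<and> dd j = e} = {k}" by (rule card_1_singletonE)
    thus ?thesis by blast
  qed
  show ?thesis
    apply (rule exI[of _ P], rule exI[of _ Q], rule exI[of _ "jordan_matrix n_as"], rule exI[of _ dd])
    using w diag uniq by auto
qed

lemma smult_one_mult_vec: assumes u: "(u :: real vec) \<in> carrier_vec n"
  shows "(c \<cdot>\<^sub>m 1\<^sub>m n) *\<^sub>v u = c \<cdot>\<^sub>v u"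
proof (rule eq_vecI)
  fix i assume "i < dim_vec (c \<cdot>\<^sub>v u)"
  hence i: "i < n" using u by simp
  have "((c \<cdot>\<^sub>m 1\<^sub>m n) *\<^sub>v u) $ i = (\<Sum>j\<in>{0..<n}. c * (if j = i then 1 else 0) * u $ j)"
    using i u by (simp add: scalar_prod_def)
  also have "\<dots> = (\<Sum>j\<in>{0..<n}. (if j = i then c * u $ j else 0))"
    by (rule sum.cong) auto
  also have "\<dots> = c * u $ i" using i by simp
  finally show "((c \<cdot>\<^sub>m 1\<^sub>m n) *\<^sub>v u) $ i = (c \<cdot>\<^sub>v u) $ i" using i u by simp
qed (use u in auto)

context
  fixes L P Q D :: "real mat" and n :: nat and dd :: "nat \<Rightarrow> real"
  assumes L: "L \<in> carrier_mat n n" and P: "P \<in> carrier_mat n n" and Q: "Q \<in> carrier_mat n n"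
    and D: "D \<in> carrier_mat n n"
    and PQ: "P * Q = 1\<^sub>m n" and QP: "Q * P = 1\<^sub>m n" and LD: "L = P * D * Q"
    and diag: "\<forall>a<n. \<forall>b<n. D $$ (a,b) = (if a = b then dd a else 0)"
begin

lemma XD_entry: assumes X: "X \<in> carrier_mat n n" and a: "a < n" and k: "k < n"
  shows "(X * D) $$ (a,k) = X $$ (a,k) * dd k"
proof -
  have "(X * D) $$ (a,k) = (\<Sum>l\<in>{0..<n}. X $$ (a,l) * D $$ (l,k))"
    using X D a k by (simp add: scalar_prod_def)
  also have "\<dots> = (\<Sum>l\<in>{0..<n}. if l = k then X $$ (a,k) * dd k else 0)"
    by (rule sum.cong, insert diag k, auto)
  finally show ?thesis using k by simp
qed

lemma DX_entry: assumes X: "X \<in> carrier_mat n n" and a: "a < n" and k: "k < n"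
  shows "(D * X) $$ (k,a) = dd k * X $$ (k,a)"
proof -
  have "(D * X) $$ (k,a) = (\<Sum>l\<in>{0..<n}. D $$ (k,l) * X $$ (l,a))"
    using X D a k by (simp add: scalar_prod_def)
  also have "\<dots> = (\<Sum>l\<in>{0..<n}. if l = k then dd k * X $$ (k,a) else 0)"
    by (rule sum.cong, insert diag k, auto)
  finally show ?thesis using k by simp
qed

lemma LP: "L * P = P * D"
proof -
  have PD: "P * D \<in> carrier_mat n n" using P D by simp
  have "L * P = P * D * (Q * P)" unfolding LD by (rule assoc_mult_mat[OF PD Q P])
  also have "\<dots> = P * D" unfolding QP using P D by simp
  finally show ?thesis .
qed

lemma QL: "Q * L = D * Q"
proof -
  have PD: "P * D \<in> carrier_mat n n" using P D by simp
  have "Q * L = Q * (P * D) * Q" unfolding LD by (rule assoc_mult_mat[OF Q PD Q, symmetric])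
  also have "Q * (P * D) = (Q * P) * D" by (rule assoc_mult_mat[OF Q P D, symmetric])
  also have "(Q * P) * D = D" unfolding QP using D by simp
  finally show ?thesis .
qed

lemma eig_col: assumes k: "k < n" shows "L *\<^sub>v col P k = dd k \<cdot>\<^sub>v col P k"
proof (rule eq_vecI)
  fix a assume "a < dim_vec (dd k \<cdot>\<^sub>v col P k)"
  hence a: "a < n" using P by simp
  have "(L *\<^sub>v col P k) $ a = (L * P) $$ (a,k)" using L P a k by simp
  also have "\<dots> = P $$ (a,k) * dd k" unfolding LP using XD_entry[OF P a k] .
  finally show "(L *\<^sub>v col P k) $ a = (dd k \<cdot>\<^sub>v col P k) $ a" using a k P by simp
qed (use L P in auto)

lemma eig_row: assumes k: "k < n" shows "transpose_mat L *\<^sub>v row Q k = dd k \<cdot>\<^sub>v row Q k"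
proof (rule eq_vecI)
  fix a assume "a < dim_vec (dd k \<cdot>\<^sub>v row Q k)"
  hence a: "a < n" using Q by simp
  have "(transpose_mat L *\<^sub>v row Q k) $ a = (Q * L) $$ (k,a)" using L Q a k 
    by (simp add: comm_scalar_prod[of _ n])
  also have "\<dots> = dd k * Q $$ (k,a)" unfolding QL using DX_entry[OF Q a k] .
  finally show "(transpose_mat L *\<^sub>v row Q k) $ a = (dd k \<cdot>\<^sub>v row Q k) $ a" using a k Q by simp
qed (use L Q in auto)

lemma ker1: assumes k: "k < n" and lk: "dd k = lam" and other: "\<forall>a<n. a \<noteq> k \<longrightarrow> dd a \<noteq> lam"
  and u: "u \<in> carrier_vec n" and Mu: "(lam \<cdot>\<^sub>m 1\<^sub>m n - L) *\<^sub>v u = 0\<^sub>v n"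
  shows "u = (row Q k \<bullet> u) \<cdot>\<^sub>v col P k"
proof -
  have Lu: "L *\<^sub>v u = lam \<cdot>\<^sub>v u"
  proof -
    have "lam \<cdot>\<^sub>v u - L *\<^sub>v u = 0\<^sub>v n"
      using Mu minus_mult_distrib_mat_vec[of "lam \<cdot>\<^sub>m 1\<^sub>m n" n n L u] L u smult_one_mult_vec[OF u] by simp
    hence "\<forall>j<n. (lam \<cdot>\<^sub>v u - L *\<^sub>v u) $ j = 0" by simp
    hence "\<forall>j<n. (L *\<^sub>v u) $ j = (lam \<cdot>\<^sub>v u) $ j" using L u by simp
    thus ?thesis using L u by (intro eq_vecI) auto
  qed
  have zero: "row Q a \<bullet> u = 0" if a: "a < n" "a \<noteq> k" for a
  proof -
    have rq: "row Q a \<in> carrier_vec n" using Q a by simp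
    have "lam * (row Q a \<bullet> u) = row Q a \<bullet> (L *\<^sub>v u)" using Lu rq u by simp
    also have "\<dots> = (transpose_mat L *\<^sub>v row Q a) \<bullet> u"
      by (rule transpose_vec_mult_scalar[OF L u rq, symmetric])
    also have "\<dots> = dd a * (row Q a \<bullet> u)" using eig_row[OF a(1)] rq u by simp
    finally show ?thesis using other a by auto
  qed
  have Qu: "Q *\<^sub>v u = (row Q k \<bullet> u) \<cdot>\<^sub>v unit_vec n k"
    by (rule eq_vecI, insert Q zero k, auto)
  have "u = (P * Q) *\<^sub>v u" unfolding PQ using u by simp
  also have "\<dots> = P *\<^sub>v (Q *\<^sub>v u)" using P Q u by simp
  also have "\<dots> = (row Q k \<bullet> u) \<cdot>\<^sub>v col P k" unfolding Qu
    by (rule eq_vecI, insert P k, auto)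
  finally show ?thesis .
qed

end


lemma commutator:
  assumes xd: "\<forall>a<n. \<forall>b<n. a \<noteq> b \<longrightarrow> x a \<noteq> x b"
    and v: "v \<in> carrier_vec n" and w: "w \<in> carrier_vec n"
    and Lv: "CM_Lax n x p *\<^sub>v v = mu \<cdot>\<^sub>v v"
    and Lw: "transpose_mat (CM_Lax n x p) *\<^sub>v w = mu \<cdot>\<^sub>v w"
  shows "(w \<bullet> ones_vec n) * (ones_vec n \<bullet> v) = w \<bullet> v"
proof -
  let ?L = "\<lambda>a b. (if a = b then p a else 1 / (x a - x b))"
  have Lv': "(\<Sum>b<n. ?L a b * v $ b) = mu * v $ a" if a: "a < n" for a
  proof -
    have "(CM_Lax n x p *\<^sub>v v) $ a = mu * v $ a" using Lv a v by simp
    thus ?thesis using a v by (simp add: CM_Lax_def scalar_prod_def atLeast0LessThan)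
  qed
  have Lw': "(\<Sum>a<n. ?L a b * w $ a) = mu * w $ b" if b: "b < n" for b
  proof -
    have "(transpose_mat (CM_Lax n x p) *\<^sub>v w) $ b = mu * w $ b" using Lw b w by (simp add: CM_Lax_def)
    thus ?thesis using b w by (simp add: CM_Lax_def scalar_prod_def atLeast0LessThan)
  qed
  define S where "S = (\<Sum>a<n. \<Sum>b<n. w $ a * ?L a b * v $ b * (x a - x b))"
  have "S = (\<Sum>a<n. \<Sum>b<n. w $ a * v $ b - (if a = b then w $ a * v $ b else 0))"
    unfolding S_def
  proof (intro sum.cong refl)
    fix a b assume "a \<in> {..<n}" "b \<in> {..<n}"
    thus "w $ a * ?L a b * v $ b * (x a - x b) = w $ a * v $ b - (if a = b then w $ a * v $ b else 0)"
      using xd by auto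
  qed
  also have "\<dots> = (\<Sum>a<n. w $ a) * (\<Sum>b<n. v $ b) - (\<Sum>a<n. w $ a * v $ a)"
    by (simp add: sum_subtractf sum_product)
  finally have S1: "S = (\<Sum>a<n. w $ a) * (\<Sum>b<n. v $ b) - (\<Sum>a<n. w $ a * v $ a)" .
  have s1: "S = (\<Sum>a<n. \<Sum>b<n. w $ a * x a * (?L a b * v $ b)) - (\<Sum>a<n. \<Sum>b<n. v $ b * x b * (?L a b * w $ a))"
    unfolding S_def sum_subtractf[symmetric] by (intro sum.cong refl) (simp add: algebra_simps)
  have s2: "(\<Sum>a<n. \<Sum>b<n. v $ b * x b * (?L a b * w $ a)) = (\<Sum>b<n. \<Sum>a<n. v $ b * x b * (?L a b * w $ a))"
    by (rule sum.swap)
  have s3: "(\<Sum>a<n. \<Sum>b<n. w $ a * x a * (?L a b * v $ b)) = (\<Sum>a<n. w $ a * x a * (\<Sum>b<n. ?L a b * v $ b))"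
    by (simp add: sum_distrib_left)
  have s4: "(\<Sum>b<n. \<Sum>a<n. v $ b * x b * (?L a b * w $ a)) = (\<Sum>b<n. v $ b * x b * (\<Sum>a<n. ?L a b * w $ a))"
    by (simp add: sum_distrib_left)
  have s5: "(\<Sum>a<n. w $ a * x a * (\<Sum>b<n. ?L a b * v $ b)) = (\<Sum>a<n. w $ a * x a * (mu * v $ a))"
    using Lv' by simp
  have s6: "(\<Sum>b<n. v $ b * x b * (\<Sum>a<n. ?L a b * w $ a)) = (\<Sum>b<n. v $ b * x b * (mu * w $ b))"
    using Lw' by simp
  have s7: "(\<Sum>a<n. w $ a * x a * (mu * v $ a)) = (\<Sum>b<n. v $ b * x b * (mu * w $ b))"
    by (simp add: mult.commute mult.left_commute)
  have "S = 0" unfolding s1 s2 s3 s4 s5 s6 s7 by simp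
  with S1 have "(\<Sum>a<n. w $ a) * (\<Sum>b<n. v $ b) = (\<Sum>a<n. w $ a * v $ a)" by simp
  thus ?thesis using v w by (simp add: ones_vec_def scalar_prod_def atLeast0LessThan)
qed


lemma trace_adj:
  fixes L :: "real mat"
  assumes L: "L \<in> carrier_mat n n"
  shows "(\<Sum>j<n. adj_mat (lam \<cdot>\<^sub>m 1\<^sub>m n - L) $$ (j,j)) = poly (pderiv (char_poly L)) lam"
proof -
  let ?M = "lam \<cdot>\<^sub>m 1\<^sub>m n - L"
  have M: "?M \<in> carrier_mat n n" using L by (intro minus_carrier_mat) auto
  have "poly (pderiv (char_poly L)) lam = (\<Sum>j<n. poly (char_poly (mat_delete L j j)) lam)"
    unfolding pderiv_char_poly[OF L] poly_sum ..
  also have "\<dots> = (\<Sum>j<n. adj_mat ?M $$ (j,j))"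
  proof (rule sum.cong[OF refl])
    fix j assume j: "j \<in> {..<n}"
    have B: "mat_delete L j j \<in> carrier_mat (n-1) (n-1)" using mat_delete_carrier[OF L] .
    have "poly (char_poly (mat_delete L j j)) lam = det (- char_matrix (mat_delete L j j) lam)"
      by (rule char_poly_matrix[OF B])
    also have "- char_matrix (mat_delete L j j) lam = mat_delete ?M j j"
      by (rule eq_matI, insert L j, auto simp: char_matrix_def mat_delete_def)
    also have "det (mat_delete ?M j j) = adj_mat ?M $$ (j,j)"
      using j M L by (simp add: adj_mat_def cofactor_def)
    finally show "poly (char_poly (mat_delete L j j)) lam = adj_mat ?M $$ (j,j)" .
  qed
  finally show ?thesis ..
qed


lemma smult_one_minus_mult_vec:
  assumes L: "(L :: real mat) \<in> carrier_mat n n" and u: "u \<in> carrier_vec n" and Lu: "L *\<^sub>v u = c \<cdot>\<^sub>v u"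
  shows "(c \<cdot>\<^sub>m 1\<^sub>m n - L) *\<^sub>v u = 0\<^sub>v n"
proof -
  have "(c \<cdot>\<^sub>m 1\<^sub>m n - L) *\<^sub>v u = (c \<cdot>\<^sub>m 1\<^sub>m n) *\<^sub>v u - L *\<^sub>v u"
    by (rule minus_mult_distrib_mat_vec[OF _ L u]) auto
  also have "\<dots> = c \<cdot>\<^sub>v u - c \<cdot>\<^sub>v u" unfolding Lu smult_one_mult_vec[OF u] ..
  also have "\<dots> = 0\<^sub>v n" using u by (intro eq_vecI) auto
  finally show ?thesis .
qed

theorem mainTheorem10:
  fixes n :: nat and x p lam :: "nat \<Rightarrow> real" and i :: nat and Psi :: "real vec"
  assumes "n \<ge> 1"
    and "\<forall>a<n. \<forall>b<n. a \<noteq> b \<longrightarrow> x a \<noteq> x b"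
    and "inj_on lam {..<n}"
    and "\<forall>j<n. eigenvalue (CM_Lax n x p) (lam j)"
    and "i < n"
    and "eigenvector (CM_Lax n x p) Psi (lam i)"
  shows "ones_vec n \<bullet> Psi \<noteq> 0 \<and>
    (vec n x \<bullet> (adj_mat (lam i \<cdot>\<^sub>m 1\<^sub>m n - CM_Lax n x p) *\<^sub>v ones_vec n))
      / (ones_vec n \<bullet> (adj_mat (lam i \<cdot>\<^sub>m 1\<^sub>m n - CM_Lax n x p) *\<^sub>v ones_vec n))
    = (vec n x \<bullet> Psi) / (ones_vec n \<bullet> Psi)"
proof -
  define L where "L = CM_Lax n x p"
  define lm where "lm = lam i"
  define M where "M = lm \<cdot>\<^sub>m 1\<^sub>m n - L"
  define A where "A = adj_mat M"
  define e where "e = ones_vec n"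
  define xv where "xv = vec n x"
  have Lc: "L \<in> carrier_mat n n" unfolding L_def CM_Lax_def by simp
  have Mc: "M \<in> carrier_mat n n" unfolding M_def using Lc by (intro minus_carrier_mat) auto
  have Ac: "A \<in> carrier_mat n n" unfolding A_def using adj_mat(1)[OF Mc] .
  have ec: "e \<in> carrier_vec n" unfolding e_def ones_vec_def by simp
  have xc: "xv \<in> carrier_vec n" unfolding xv_def by simp
  define as where "as = map lam [0..<n]"
  have das: "distinct as" unfolding as_def distinct_map using assms(3)
    by (simp add: atLeast0LessThan)
  have len: "length as = n" unfolding as_def by simp
  have evs: "\<forall>a\<in>set as. eigenvalue L a" using assms(4) unfolding as_def L_def by auto
  have cp: "char_poly L = prod_list (map (\<lambda>a. [:-a,1:]) as)"
    by (rule char_poly_eq_prod[OF Lc das len evs])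
  have lm_in: "lm \<in> set as" using assms(5) unfolding as_def lm_def by auto
  obtain P Q D dd where P: "P \<in> carrier_mat n n" and Q: "Q \<in> carrier_mat n n"
    and D: "D \<in> carrier_mat n n" and PQ: "P * Q = 1\<^sub>m n" and QP: "Q * P = 1\<^sub>m n" and LD: "L = P * D * Q"
    and diag: "\<forall>a<n. \<forall>b<n. D $$ (a,b) = (if a = b then dd a else 0)"
    and un: "\<forall>e\<in>set as. \<exists>k<n. dd k = e \<and> (\<forall>j<n. dd j = e \<longrightarrow> j = k)"
    using diag_form[OF Lc cp das] by blast
  from un lm_in obtain k where k: "k < n" and lk: "dd k = lm" and uk: "\<forall>j<n. dd j = lm \<longrightarrow> j = k" by blast
  have other: "\<forall>a<n. a \<noteq> k \<longrightarrow> dd a \<noteq> lm" using uk by auto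
  have Psi: "Psi \<in> carrier_vec n" "Psi \<noteq> 0\<^sub>v n" "L *\<^sub>v Psi = lm \<cdot>\<^sub>v Psi"
    using assms(6) Lc unfolding eigenvector_def L_def lm_def by auto
  have MPsi: "M *\<^sub>v Psi = 0\<^sub>v n" unfolding M_def by (rule smult_one_minus_mult_vec[OF Lc Psi(1) Psi(3)])
  have detM: "det M = 0" using det_0_iff_vec_prod_zero[OF Mc] Psi MPsi by auto
  have MA: "M * A = 0\<^sub>m n n" unfolding A_def using adj_mat(2)[OF Mc] detM by (auto intro!: eq_matI)
  have AM: "A * M = 0\<^sub>m n n" unfolding A_def using adj_mat(3)[OF Mc] detM by (auto intro!: eq_matI)
  define v where "v = col P k"
  define w where "w = row Q k"
  have vc: "v \<in> carrier_vec n" unfolding v_def using P k by simp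
  have wc: "w \<in> carrier_vec n" unfolding w_def using Q k by simp
  note ker = ker1[OF Lc P Q D PQ QP LD diag k lk other]
  have LTc: "transpose_mat L \<in> carrier_mat n n" using Lc by simp
  have PTc: "transpose_mat P \<in> carrier_mat n n" using P by simp
  have QTc: "transpose_mat Q \<in> carrier_mat n n" using Q by simp
  have DTc: "transpose_mat D \<in> carrier_mat n n" using D by simp
  have QPT: "transpose_mat Q * transpose_mat P = 1\<^sub>m n"
    using transpose_mult[OF P Q] PQ by simp
  have PQT: "transpose_mat P * transpose_mat Q = 1\<^sub>m n"
    using transpose_mult[OF Q P] QP by simp
  have PD: "P * D \<in> carrier_mat n n" using P D by simp
  have LDT: "transpose_mat L = transpose_mat Q * transpose_mat D * transpose_mat P"
  proof -
    have "transpose_mat L = transpose_mat Q * transpose_mat (P * D)"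
      unfolding LD by (rule transpose_mult[OF PD Q])
    also have "transpose_mat (P * D) = transpose_mat D * transpose_mat P" by (rule transpose_mult[OF P D])
    also have "transpose_mat Q * (transpose_mat D * transpose_mat P) = transpose_mat Q * transpose_mat D * transpose_mat P"
      by (rule assoc_mult_mat[OF QTc DTc PTc, symmetric])
    finally show ?thesis .
  qed
  have diagT: "\<forall>a<n. \<forall>b<n. transpose_mat D $$ (a,b) = (if a = b then dd a else 0)"
    using diag D by auto
  note kerT = ker1[OF LTc QTc PTc DTc QPT PQT LDT diagT k lk other]
  have MT: "lm \<cdot>\<^sub>m 1\<^sub>m n - transpose_mat L = transpose_mat M"
    unfolding M_def using Lc by (intro eq_matI) auto
  have Psi_eq: "Psi = (w \<bullet> Psi) \<cdot>\<^sub>v v" unfolding v_def w_def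
    by (rule ker[OF Psi(1)], fold M_def, rule MPsi)
  have ATw: "transpose_mat A *\<^sub>v w \<in> carrier_vec n" using Ac wc by simp
  have "(lm \<cdot>\<^sub>m 1\<^sub>m n - transpose_mat L) *\<^sub>v (transpose_mat A *\<^sub>v w) = 0\<^sub>v n"
  proof -
    have "transpose_mat M *\<^sub>v (transpose_mat A *\<^sub>v w) = (transpose_mat M * transpose_mat A) *\<^sub>v w"
      using Mc Ac wc by (intro assoc_mult_mat_vec[symmetric]) auto
    also have "transpose_mat M * transpose_mat A = transpose_mat (A * M)"
      by (rule transpose_mult[OF Ac Mc, symmetric])
    also have "\<dots> *\<^sub>v w = 0\<^sub>v n" unfolding AM using wc by (intro eq_vecI) auto
    finally show ?thesis unfolding MT .
  qed
  from kerT[OF ATw this] have ATw_eq: "transpose_mat A *\<^sub>v w = (v \<bullet> (transpose_mat A *\<^sub>v w)) \<cdot>\<^sub>v w"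
    using P Q k unfolding v_def w_def by simp
  define c where "c = v \<bullet> (transpose_mat A *\<^sub>v w)"
  have Az: "A *\<^sub>v z = (c * (w \<bullet> z)) \<cdot>\<^sub>v v" if z: "z \<in> carrier_vec n" for z
  proof -
    have Azc: "A *\<^sub>v z \<in> carrier_vec n" using Ac z by simp
    have "M *\<^sub>v (A *\<^sub>v z) = (M * A) *\<^sub>v z" using Mc Ac z by simp
    also have "\<dots> = 0\<^sub>v n" unfolding MA using z by (intro eq_vecI) auto
    finally have "(lm \<cdot>\<^sub>m 1\<^sub>m n - L) *\<^sub>v (A *\<^sub>v z) = 0\<^sub>v n" unfolding M_def .
    from ker[OF Azc this] have "A *\<^sub>v z = (w \<bullet> (A *\<^sub>v z)) \<cdot>\<^sub>v v" unfolding v_def w_def .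
    also have "w \<bullet> (A *\<^sub>v z) = (transpose_mat A *\<^sub>v w) \<bullet> z"
      by (rule transpose_vec_mult_scalar[OF Ac z wc, symmetric])
    also have "\<dots> = c * (w \<bullet> z)" unfolding c_def by (subst ATw_eq, insert wc z, simp)
    finally show ?thesis .
  qed
  have wv: "w \<bullet> v = 1"
  proof -
    have "(Q * P) $$ (k,k) = 1" unfolding QP using k by simp
    thus ?thesis unfolding v_def w_def using P Q k by simp
  qed
  have Lv: "L *\<^sub>v v = lm \<cdot>\<^sub>v v" unfolding v_def lk[symmetric]
    by (rule eig_col[OF Lc P Q D PQ QP LD diag k])
  have Lw: "transpose_mat L *\<^sub>v w = lm \<cdot>\<^sub>v w" unfolding w_def lk[symmetric]
    by (rule eig_row[OF Lc P Q D PQ QP LD diag k])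
  have comm: "(w \<bullet> e) * (e \<bullet> v) = 1"
    using commutator[OF assms(2) vc wc Lv[unfolded L_def] Lw[unfolded L_def]] wv unfolding e_def by simp
  have tr: "(\<Sum>j<n. A $$ (j,j)) = c"
  proof -
    have "(\<Sum>j<n. A $$ (j,j)) = (\<Sum>j<n. c * (w $ j * v $ j))"
    proof (rule sum.cong[OF refl])
      fix j assume "j \<in> {..<n}"
      hence j: "j < n" by simp
      have "A $$ (j,j) = (A *\<^sub>v unit_vec n j) $ j" using Ac j by simp
      also have "\<dots> = c * (w $ j * v $ j)" unfolding Az[OF unit_vec_carrier] using wc vc j by simp
      finally show "A $$ (j,j) = c * (w $ j * v $ j)" .
    qed
    also have "\<dots> = c * (w \<bullet> v)" using wc vc by (simp add: scalar_prod_def sum_distrib_left atLeast0LessThan)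
    finally show ?thesis using wv by simp
  qed
  have c0: "c \<noteq> 0"
  proof -
    let ?p = "char_poly L"
    have ord: "order lm ?p = 1" unfolding cp order_prod_lin[OF das] using lm_in by simp
    have dm: "degree ?p = n" "monic ?p" using degree_monic_char_poly[OF Lc] by auto
    hence p0: "?p \<noteq> 0" by auto
    have root: "poly ?p lm = 0" using order_root[of ?p lm] ord by simp
    have "order lm (pderiv ?p) = 0" using order_pderiv[OF p0 root] ord by simp
    moreover have "pderiv ?p \<noteq> 0" using dm assms(1) pderiv_eq_0_iff[of ?p] by simp
    ultimately have "poly (pderiv ?p) lm \<noteq> 0" using order_root by blast
    thus ?thesis using tr trace_adj[OF Lc, of lm] unfolding A_def M_def by simp
  qed
  have we0: "w \<bullet> e \<noteq> 0" and ev0: "e \<bullet> v \<noteq> 0" using comm by auto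
  have wPsi0: "w \<bullet> Psi \<noteq> 0"
  proof
    assume "w \<bullet> Psi = 0"
    hence "Psi = 0 \<cdot>\<^sub>v v" using Psi_eq by simp
    also have "\<dots> = 0\<^sub>v n" using vc by (intro eq_vecI) auto
    finally have "Psi = 0\<^sub>v n" .
    with Psi(2) show False by simp
  qed
  have Ae: "A *\<^sub>v e = (c * (w \<bullet> e)) \<cdot>\<^sub>v v" by (rule Az[OF ec])
  have eAe: "e \<bullet> (A *\<^sub>v e) = c * (w \<bullet> e) * (e \<bullet> v)" unfolding Ae using ec vc by simp
  have xAe: "xv \<bullet> (A *\<^sub>v e) = c * (w \<bullet> e) * (xv \<bullet> v)" unfolding Ae using xc vc by simp
  have ePsi: "e \<bullet> Psi = (w \<bullet> Psi) * (e \<bullet> v)" by (subst Psi_eq, insert ec vc, simp)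
  have xPsi: "xv \<bullet> Psi = (w \<bullet> Psi) * (xv \<bullet> v)" by (subst Psi_eq, insert xc vc, simp)
  have "e \<bullet> Psi \<noteq> 0 \<and> (xv \<bullet> (A *\<^sub>v e)) / (e \<bullet> (A *\<^sub>v e)) = (xv \<bullet> Psi) / (e \<bullet> Psi)"
    unfolding eAe xAe ePsi xPsi using c0 we0 ev0 wPsi0 by (simp add: field_simps)
  thus ?thesis unfolding A_def M_def L_def lm_def e_def xv_def .
qed

end
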